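(* Let $(a_k)_{k\ge1}$ be an increasing sequence of positive integers such that $\lim_{k\to\infty}a_{k+1}/a_k=\eta>1$ for some transcendental number $\eta$, and let $m\in\mathbb N$. Then there exists $\ell\in\mathbb N$ such that, writing $$S_{1,\ell}(\omega)=\sum_{k=1}^{\ell}\cos(2\pi a_k\omega),\qquad S_{\ell+1,n}(\omega)=\sum_{k=\ell+1}^{n}\cos(2\pi a_k\omega)$$ (the latter being $0$ if $n\le\ell$), for all $u,v\in\mathbb N$ with $u+v\le m$ and all $n\in\mathbb N$ we have $$\mathbb E\big[S_{1,\ell}^u S_{\ell+1,n}^v\big]=\mathbb E\big[S_{1,\ell}^u\big]\,\mathbb E\big[S_{\ell+1,n}^v\big],$$ where expectation is with respect to Lebesgue measure on $\omega\in[0,1]$. *)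

theory Defs
  imports "HOL-Analysis.Analysis" "HOL-Computational_Algebra.Polynomial"
begin

definition cos_sum :: "(nat \<Rightarrow> nat) \<Rightarrow> nat \<Rightarrow> nat \<Rightarrow> real \<Rightarrow> real" where
  "cos_sum a p q \<omega> = (\<Sum>k\<in>{p..q}. cos (2 * pi * real (a k) * \<omega>))"

definition E01 :: "(real \<Rightarrow> real) \<Rightarrow> real" where
  "E01 f = (LBINT \<omega>:{0..1}. f \<omega>)"

end

theory Submission
  imports Defs
begin


inductive tp :: "int set \<Rightarrow> (real \<Rightarrow> real) \<Rightarrow> bool" for A where
  tp0: "tp A (\<lambda>_. 0)"
| tpc: "N \<in> A \<Longrightarrow> tp A f \<Longrightarrow> tp A (\<lambda>x. c * cos (2 * pi * of_int N * x) + f x)"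

lemma tp_eq: "tp A f \<Longrightarrow> f = g \<Longrightarrow> tp A g" by simp

lemma tp_cont: "tp A f \<Longrightarrow> continuous_on UNIV f"
  by (induction rule: tp.induct) (auto intro!: continuous_intros)

lemma tp_add: "tp A f \<Longrightarrow> tp A g \<Longrightarrow> tp A (\<lambda>x. f x + g x)"
proof (induction rule: tp.induct)
  case tp0 then show ?case by simp
next
  case (tpc N f c)
  have "tp A (\<lambda>x. c * cos (2 * pi * of_int N * x) + (f x + g x))"
    using tpc by (intro tp.tpc) auto
  then show ?case by (simp add: add.assoc)
qed

lemma tp_scale: "tp A f \<Longrightarrow> tp A (\<lambda>x. d * f x)"
proof (induction rule: tp.induct)
  case tp0 then show ?case by (simp add: tp.tp0)
next
  case (tpc N f c)
  have "tp A (\<lambda>x. (d*c) * cos (2 * pi * of_int N * x) + d * f x)"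
    using tpc by (intro tp.tpc) auto
  then show ?case by (simp add: algebra_simps)
qed

lemma tp_mono: "tp A f \<Longrightarrow> A \<subseteq> B \<Longrightarrow> tp B f"
  by (induction rule: tp.induct) (auto intro: tp.intros)

lemma tp_cos: "N \<in> A \<Longrightarrow> tp A (\<lambda>x. cos (2 * pi * of_int N * x))"
  using tpc[OF _ tp0, of N A 1] by simp

definition pm :: "int set \<Rightarrow> int set \<Rightarrow> int set" where
  "pm A B = {N + M |N M. N \<in> A \<and> M \<in> B} \<union> {N - M |N M. N \<in> A \<and> M \<in> B}"

lemma cos_prod_eq: "cos (2 * pi * of_int N * x) * cos (2 * pi * of_int M * x) =
   cos (2 * pi * of_int (N - M) * x) / 2 + cos (2 * pi * of_int (N + M) * x) / 2"
proof -
  have 1: "2 * pi * of_int (N - M) * x = 2 * pi * of_int N * x - 2 * pi * of_int M * x"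
    by (simp add: algebra_simps)
  have 2: "2 * pi * of_int (N + M) * x = 2 * pi * of_int N * x + 2 * pi * of_int M * x"
    by (simp add: algebra_simps)
  show ?thesis unfolding 1 2 cos_times_cos by simp
qed

lemma aux_ring: "(cN::real) * cM = P/2 + Q/2 \<Longrightarrow> cN * (d * cM + G) = d/2 * P + (d/2 * Q + cN * G)"
proof -
  assume h: "cN * cM = P/2 + Q/2"
  have "cN * (d * cM + G) = d * (cN * cM) + cN * G" by algebra
  also have "\<dots> = d * (P/2 + Q/2) + cN * G" using h by simp
  also have "\<dots> = d/2 * P + (d/2 * Q + cN * G)" by algebra
  finally show ?thesis .
qed

lemma tp_mult_cos: "tp B g \<Longrightarrow> N \<in> A \<Longrightarrow> tp (pm A B) (\<lambda>x. cos (2 * pi * of_int N * x) * g x)"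
proof (induction rule: tp.induct)
  case tp0 then show ?case by (simp add: tp.tp0)
next
  case (tpc M g d)
  have "tp (pm A B) (\<lambda>x. (d/2) * cos (2 * pi * of_int (N - M) * x) + ((d/2) * cos (2 * pi * of_int (N + M) * x)
      + cos (2 * pi * of_int N * x) * g x))"
    using tpc by (intro tp.tpc tp_scale tp_cos) (auto simp: pm_def)
  then show ?case by (rule tp_eq) (rule ext, rule aux_ring[OF cos_prod_eq, symmetric])
qed

lemma tp_mult: "tp A f \<Longrightarrow> tp B g \<Longrightarrow> tp (pm A B) (\<lambda>x. f x * g x)"
proof (induction rule: tp.induct)
  case tp0 then show ?case by (simp add: tp.tp0)
next
  case (tpc N f c)
  have "tp (pm A B) (\<lambda>x. c * (cos (2 * pi * of_int N * x) * g x) + f x * g x)"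
    using tpc by (intro tp_add tp_scale tp_mult_cos) auto
  then show ?case by (simp add: algebra_simps)
qed

lemma tp_sum: "finite I \<Longrightarrow> (\<And>k. k \<in> I \<Longrightarrow> tp A (f k)) \<Longrightarrow> tp A (\<lambda>x. \<Sum>k\<in>I. f k x)"
proof (induction I rule: finite_induct)
  case empty then show ?case by (simp add: tp.tp0)
next
  case (insert k I)
  then show ?case by (auto intro!: tp_add)
qed

lemma tp_cos_sum: "tp {int (a k) |k. k \<in> {p..q}} (cos_sum a p q)"
proof -
  have "tp {int (a k) |k. k \<in> {p..q}} (\<lambda>x. cos (2 * pi * real (a k) * x))" if "k \<in> {p..q}" for k
    using tp_cos[of "int (a k)" "{int (a k) |k. k \<in> {p..q}}"] that by auto
  then show ?thesis unfolding cos_sum_def by (intro tp_sum) auto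
qed

fun Pw :: "int set \<Rightarrow> nat \<Rightarrow> int set" where
  "Pw A 0 = {0}"
| "Pw A (Suc u) = pm A (Pw A u)"

lemma tp_pow: "tp A f \<Longrightarrow> tp (Pw A u) (\<lambda>x. f x ^ u)"
proof (induction u)
  case 0 then show ?case using tp_cos[of 0 "{0}"] by simp
next
  case (Suc u) then show ?case using tp_mult[of A f "Pw A u" "\<lambda>x. f x ^ u"] by simp
qed

definition Icos :: "int \<Rightarrow> real" where "Icos K = (if K = 0 then 1 else 0)"

lemma int_cos: "integral {0..1} (\<lambda>x. cos (2 * pi * of_int K * x)) = Icos K"
proof (cases "K = 0")
  case True then show ?thesis by (simp add: Icos_def)
next
  case False
  define c where "c = 2 * pi * of_int K"
  have c: "c \<noteq> 0" using False by (simp add: c_def)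
  have d: "((\<lambda>x. sin (c * x) / c) has_vector_derivative cos (c * x)) (at x within {0..1})" for x
    unfolding has_real_derivative_iff_has_vector_derivative[symmetric]
    using c by (auto intro!: derivative_eq_intros)
  have "((\<lambda>x. cos (c * x)) has_integral (sin (c * 1) / c - sin (c * 0) / c)) {0..1}"
    by (rule fundamental_theorem_of_calculus) (use d in auto)
  moreover have "sin (c * 1) = 0" unfolding c_def using sin_int_2pin[of K] by (simp add: mult.commute)
  ultimately have "((\<lambda>x. cos (c * x)) has_integral 0) {0..1}" by simp
  then show ?thesis using False by (simp add: Icos_def integral_unique c_def mult.assoc)
qed

lemma E01_int: "continuous_on UNIV f \<Longrightarrow> E01 f = integral {0..1} f"
proof -
  assume c: "continuous_on UNIV f"
  have "continuous_on {0..1} f" using c continuous_on_subset by blast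
  then have "set_integrable lborel {0..1::real} f"
    unfolding set_integrable_def using borel_integrable_compact[of "{0..1::real}" f] by simp
  then show ?thesis unfolding E01_def by (rule set_borel_integral_eq_integral(2))
qed

lemma tp_int: "tp A f \<Longrightarrow> f integrable_on {0..1}"
  by (rule integrable_continuous_interval) (metis tp_cont continuous_on_subset subset_UNIV)

lemma Icos_prod: "(\<And>x. x \<in> B \<Longrightarrow> (N = x \<or> N = - x) \<Longrightarrow> N = 0 \<and> x = 0) \<Longrightarrow> M \<in> B \<Longrightarrow>
   Icos (N - M) / 2 + Icos (N + M) / 2 = Icos N * Icos M"
proof -
  assume H: "\<And>x. x \<in> B \<Longrightarrow> (N = x \<or> N = - x) \<Longrightarrow> N = 0 \<and> x = 0" and M: "M \<in> B"
  show ?thesis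
  proof (cases "N = 0 \<and> M = 0")
    case True then show ?thesis by (simp add: Icos_def)
  next
    case False
    have "N \<noteq> M" "N \<noteq> - M" using H[OF M] False by blast+
    then have "N - M \<noteq> 0" "N + M \<noteq> 0" by auto
    moreover have "Icos N * Icos M = 0" using False by (auto simp: Icos_def)
    ultimately show ?thesis by (simp add: Icos_def)
  qed
qed

lemma int_lin: "f integrable_on S \<Longrightarrow> g integrable_on S \<Longrightarrow>
  integral S (\<lambda>x. (p::real) * f x + g x) = p * integral S f + integral S g"
proof -
  assume f: "f integrable_on S" and g: "g integrable_on S"
  have pf: "(\<lambda>x. p * f x) integrable_on S" using integrable_on_cmult_left[OF f, of p] by simp
  have "integral S (\<lambda>x. p * f x + g x) = integral S (\<lambda>x. p * f x) + integral S g"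
    by (rule integral_add[OF pf g])
  also have "integral S (\<lambda>x. p * f x) = p * integral S f" by (rule integral_mult[OF f, symmetric])
  finally show ?thesis .
qed

lemma key1: "tp B g \<Longrightarrow> (\<And>M. M \<in> B \<Longrightarrow> (N = M \<or> N = - M) \<Longrightarrow> N = 0 \<and> M = 0) \<Longrightarrow>
  integral {0..1} (\<lambda>x. cos (2 * pi * of_int N * x) * g x) = Icos N * integral {0..1} g"
proof (induction rule: tp.induct)
  case tp0 then show ?case by simp
next
  case (tpc M g d)
  have i1: "(\<lambda>x. cos (2 * pi * of_int K * x)) integrable_on {0..1}" for K
    by (rule tp_int[OF tp_cos[of K UNIV]]) simp
  have i2: "g integrable_on {0..1}" using tpc tp_int by blast
  have i3: "(\<lambda>x. cos (2 * pi * of_int N * x) * g x) integrable_on {0..1}"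
    using tp_int[OF tp_mult_cos[OF tpc(2), of N UNIV]] by simp
  have i4: "(\<lambda>x. (d/2) * cos (2 * pi * of_int (N + M) * x) + cos (2 * pi * of_int N * x) * g x) integrable_on {0..1}"
    by (rule integrable_add[OF _ i3]) (rule tp_int[OF tp_scale[OF tp_cos[of "N+M" UNIV]]], simp)
  have e: "(\<lambda>x. cos (2 * pi * of_int N * x) * (d * cos (2 * pi * of_int M * x) + g x)) =
    (\<lambda>x. (d/2) * cos (2 * pi * of_int (N - M) * x) + ((d/2) * cos (2 * pi * of_int (N + M) * x)
      + cos (2 * pi * of_int N * x) * g x))"
    by (rule ext, rule aux_ring[OF cos_prod_eq])
  have "integral {0..1} (\<lambda>x. cos (2 * pi * of_int N * x) * (d * cos (2 * pi * of_int M * x) + g x))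
     = (d/2) * Icos (N - M) + ((d/2) * Icos (N + M) + Icos N * integral {0..1} g)"
  proof -
    have ih: "integral {0..1} (\<lambda>x. cos (2 * pi * of_int N * x) * g x) = Icos N * integral {0..1} g"
      using tpc.IH tpc.prems by blast
    show ?thesis unfolding e int_lin[OF i1 i4] int_lin[OF i1 i3] int_cos ih ..
  qed
  also have "\<dots> = Icos N * (d * Icos M + integral {0..1} g)"
  proof -
    have "Icos (N - M) / 2 + Icos (N + M) / 2 = Icos N * Icos M"
      using Icos_prod[of B N M] tpc by blast
    then have "d * (Icos (N - M) / 2 + Icos (N + M) / 2) + Icos N * integral {0..1} g
        = d * (Icos N * Icos M) + Icos N * integral {0..1} g" by simp
    then show ?thesis by (simp add: algebra_simps)
  qed
  also have "\<dots> = Icos N * integral {0..1} (\<lambda>x. d * cos (2 * pi * of_int M * x) + g x)"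
    unfolding int_lin[OF i1 i2] int_cos ..
  finally show ?case .
qed

lemma key: "tp A f \<Longrightarrow> tp B g \<Longrightarrow> (\<And>N M. N \<in> A \<Longrightarrow> M \<in> B \<Longrightarrow> (N = M \<or> N = - M) \<Longrightarrow> N = 0 \<and> M = 0) \<Longrightarrow>
  E01 (\<lambda>x. f x * g x) = E01 f * E01 g"
proof -
  assume f: "tp A f" and g: "tp B g" and H: "\<And>N M. N \<in> A \<Longrightarrow> M \<in> B \<Longrightarrow> (N = M \<or> N = - M) \<Longrightarrow> N = 0 \<and> M = 0"
  have "integral {0..1} (\<lambda>x. f x * g x) = integral {0..1} f * integral {0..1} g"
    using f H
  proof (induction rule: tp.induct)
    case tp0 then show ?case by simp
  next
    case (tpc N f c)
    have i1: "(\<lambda>x. cos (2 * pi * of_int N * x)) integrable_on {0..1}"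
      by (rule tp_int[OF tp_cos[of N UNIV]]) simp
    have i2: "f integrable_on {0..1}" using tpc tp_int by blast
    have i3: "(\<lambda>x. cos (2 * pi * of_int N * x) * g x) integrable_on {0..1}"
      using tp_int[OF tp_mult_cos[OF g, of N UNIV]] by simp
    have i4: "(\<lambda>x. f x * g x) integrable_on {0..1}"
      using tp_int[OF tp_mult[OF tpc(2) g]] by simp
    have e: "(\<lambda>x. (c * cos (2 * pi * of_int N * x) + f x) * g x) =
       (\<lambda>x. c * (cos (2 * pi * of_int N * x) * g x) + f x * g x)"
      by (rule ext) (simp add: algebra_simps)
    have k: "integral {0..1} (\<lambda>x. cos (2 * pi * of_int N * x) * g x) = Icos N * integral {0..1} g"
      using key1[OF g, of N] tpc H by blast
    have "integral {0..1} (\<lambda>x. c * (cos (2 * pi * of_int N * x) * g x) + f x * g x)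
       = c * (Icos N * integral {0..1} g) + integral {0..1} f * integral {0..1} g"
    proof -
      have ih: "integral {0..1} (\<lambda>x. f x * g x) = integral {0..1} f * integral {0..1} g" using tpc by blast
      show ?thesis unfolding int_lin[OF i3 i4] k ih ..
    qed
    also have "\<dots> = (c * Icos N + integral {0..1} f) * integral {0..1} g"
      by (simp add: algebra_simps)
    also have "c * Icos N + integral {0..1} f = integral {0..1} (\<lambda>x. c * cos (2 * pi * of_int N * x) + f x)"
      unfolding int_lin[OF i1 i2] int_cos ..
    finally show ?case unfolding e .
  qed
  then show ?thesis
    unfolding E01_int[OF tp_cont[OF tp_mult[OF f g]]] E01_int[OF tp_cont[OF f]] E01_int[OF tp_cont[OF g]] .
qed




lemma transc_p:
  fixes c :: "nat \<Rightarrow> int" and \<eta> :: real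
  assumes "\<not> algebraic \<eta>" "c 0 \<noteq> 0" "\<eta> > 0"
  shows "(\<Sum>i\<le>L. of_int (c i) * (1/\<eta>)^i) \<noteq> 0"
proof
  assume h: "(\<Sum>i\<le>L. of_int (c i) * (1/\<eta>)^i) = 0"
  define P :: "real poly" where "P = (\<Sum>i\<le>L. monom (of_int (c i)) (L - i))"
  have "poly P \<eta> = (\<Sum>i\<le>L. of_int (c i) * \<eta>^(L - i))"
    unfolding P_def by (simp add: poly_sum poly_monom)
  also have "\<dots> = (\<Sum>i\<le>L. \<eta>^L * (of_int (c i) * (1/\<eta>)^i))"
    using assms(3) by (intro sum.cong) (auto simp: power_diff power_one_over field_simps)
  also have "\<dots> = 0" using h by (simp add: sum_distrib_left[symmetric])
  finally have p0: "poly P \<eta> = 0" .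
  have cf: "coeff P n = (\<Sum>i\<le>L. if L - i = n then of_int (c i) else 0)" for n
    unfolding P_def by (simp add: coeff_sum coeff_monom)
  have "coeff P n \<in> \<int>" for n unfolding cf by (intro Ints_sum) auto
  moreover have "coeff P L = of_int (c 0)"
  proof -
    have "coeff P L = (\<Sum>i\<le>L. if i = 0 then of_int (c i) else 0)"
      unfolding cf by (intro sum.cong) auto
    then show ?thesis by simp
  qed
  then have "P \<noteq> 0" using assms(2) by auto
  ultimately have "algebraic \<eta>" using p0 by (intro algebraicI) auto
  with assms(1) show False by simp
qed

lemma reidx: "L \<le> (J::nat) \<Longrightarrow> (\<Sum>k\<in>{J-L..J}. f k) = (\<Sum>i\<in>{..L}. f (J - i))"
  apply (rule sum.reindex_bij_witness[of _ "\<lambda>i. J - i" "\<lambda>k. J - k"])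
  apply (auto simp: diff_diff_cancel)
  done

context
  fixes a :: "nat \<Rightarrow> nat" and \<eta> :: real and m :: nat
  assumes pos: "\<And>k. k \<ge> 1 \<Longrightarrow> a k > 0"
    and incr: "\<And>k. k \<ge> 1 \<Longrightarrow> a k < a (Suc k)"
    and lim: "(\<lambda>k. real (a (Suc k)) / real (a k)) \<longlonglongrightarrow> \<eta>"
    and gt1: "\<eta> > 1"
    and transc: "\<not> algebraic \<eta>"
begin

lemma mono_a: "1 \<le> i \<Longrightarrow> i \<le> j \<Longrightarrow> a i \<le> a j"
proof (induction j)
  case 0 then show ?case by simp
next
  case (Suc j)
  show ?case
  proof (cases "i = Suc j")
    case False
    then have "a i \<le> a j" "j \<ge> 1" using Suc by auto
    then show ?thesis using incr[of j] by linarith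
  qed simp
qed

lemma apos: "k \<ge> 1 \<Longrightarrow> real (a k) > 0" using pos by simp

lemma apos': "k \<ge> 1 \<Longrightarrow> real (a k) \<noteq> 0" using pos by simp

lemma apos0: "k \<ge> 1 \<Longrightarrow> a k \<noteq> 0" using pos by simp

lemma gap: "\<epsilon> > 0 \<Longrightarrow> \<exists>G J1. \<forall>J\<ge>J1. real (a (J - G)) \<le> \<epsilon> * real (a J)"
proof -
  assume eps: "\<epsilon> > 0"
  define \<rho> where "\<rho> = (1 + \<eta>) / 2"
  have r1: "\<rho> > 1" "\<rho> < \<eta>" using gt1 by (auto simp: \<rho>_def)
  have "eventually (\<lambda>k. real (a (Suc k)) / real (a k) > \<rho>) sequentially"
    using order_tendstoD(1)[OF lim r1(2)] .
  then obtain K0 where K0: "\<And>k. k \<ge> K0 \<Longrightarrow> real (a (Suc k)) / real (a k) > \<rho>"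
    by (auto simp: eventually_sequentially)
  define K where "K = max K0 1"
  have step: "real (a (Suc k)) \<ge> \<rho> * real (a k)" if "k \<ge> K" for k
  proof -
    have "real (a k) > 0" using pos[of k] that by (auto simp: K_def)
    moreover have "real (a (Suc k)) / real (a k) > \<rho>" using K0[of k] that by (auto simp: K_def)
    ultimately show ?thesis by (simp add: field_simps)
  qed
  have grow: "\<rho> ^ j * real (a k) \<le> real (a (k + j))" if "k \<ge> K" for k j
  proof (induction j)
    case 0 then show ?case by simp
  next
    case (Suc j)
    have "\<rho> ^ Suc j * real (a k) = \<rho> * (\<rho> ^ j * real (a k))" by simp
    also have "\<dots> \<le> \<rho> * real (a (k + j))" using Suc r1 by (intro mult_left_mono) auto
    also have "\<dots> \<le> real (a (k + Suc j))" using step[of "k + j"] that by simp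
    finally show ?case .
  qed
  obtain G where G: "1 / \<epsilon> < \<rho> ^ G" using real_arch_pow[OF r1(1)] by blast
  have "\<forall>J\<ge>K + G. real (a (J - G)) \<le> \<epsilon> * real (a J)"
  proof (intro allI impI)
    fix J assume J: "J \<ge> K + G"
    have "\<rho> ^ G * real (a (J - G)) \<le> real (a (J - G + G))" using J by (intro grow) auto
    then have h: "\<rho> ^ G * real (a (J - G)) \<le> real (a J)" using J by simp
    have "real (a (J - G)) = \<epsilon> * ((1/\<epsilon>) * real (a (J - G)))" using eps by simp
    also have "\<dots> \<le> \<epsilon> * (\<rho> ^ G * real (a (J - G)))"
      using G eps by (intro mult_left_mono mult_right_mono) auto
    also have "\<dots> \<le> \<epsilon> * real (a J)" using h eps by (intro mult_left_mono) auto
    finally show "real (a (J - G)) \<le> \<epsilon> * real (a J)" .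
  qed
  then show ?thesis by blast
qed

lemma ratio_lim: "(\<lambda>M. real (a M) / real (a (M + i))) \<longlonglongrightarrow> (1/\<eta>)^i"
proof (induction i)
  case 0
  have ev0: "eventually (\<lambda>M. 1 = real (a M) / real (a (M + 0))) sequentially"
    unfolding eventually_sequentially using apos' by (intro exI[of _ 1] allI impI) simp
  have c0: "(\<lambda>M. 1::real) \<longlonglongrightarrow> (1/\<eta>)^0" by simp
  show ?case by (rule Lim_transform_eventually[OF c0 ev0])
next
  case (Suc i)
  have "(\<lambda>M. inverse (real (a (Suc (M + i))) / real (a (M + i)))) \<longlonglongrightarrow> inverse \<eta>"
    using tendsto_inverse[OF LIMSEQ_ignore_initial_segment[OF lim, of i]] gt1 by simp
  then have "(\<lambda>M. real (a M) / real (a (M + i)) * inverse (real (a (Suc (M + i))) / real (a (M + i))))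
       \<longlonglongrightarrow> (1/\<eta>)^i * inverse \<eta>"
    using Suc by (intro tendsto_mult)
  moreover have "eventually (\<lambda>M. real (a M) / real (a (M + i)) * inverse (real (a (Suc (M + i))) / real (a (M + i)))
      = real (a M) / real (a (M + Suc i))) sequentially"
    unfolding eventually_sequentially
  proof (intro exI[of _ 1] allI impI)
    fix M :: nat assume M: "M \<ge> 1"
    have "real (a M) > 0" "real (a (M + i)) > 0" "real (a (Suc (M + i))) > 0" using apos M by auto
    then show "real (a M) / real (a (M + i)) * inverse (real (a (Suc (M + i))) / real (a (M + i)))
      = real (a M) / real (a (M + Suc i))" by (simp add: field_simps)
  qed
  ultimately have "(\<lambda>M. real (a M) / real (a (M + Suc i))) \<longlonglongrightarrow> (1/\<eta>)^i * inverse \<eta>"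
    by (rule Lim_transform_eventually)
  moreover have "(1/\<eta>)^i * inverse \<eta> = (1/\<eta>)^Suc i" by (simp add: divide_inverse mult.commute)
  ultimately show ?case by simp
qed

definition SP :: "nat \<Rightarrow> nat \<Rightarrow> bool" where
  "SP k L \<longleftrightarrow> (\<exists>\<delta>>0. \<exists>J0. \<forall>J\<ge>J0. \<forall>e::nat\<Rightarrow>int. (\<Sum>i\<in>{1..J}. \<bar>e i\<bar>) \<le> int m \<longrightarrow> e J \<noteq> 0 \<longrightarrow>
     card {i\<in>{1..J}. i < J - L \<and> e i \<noteq> 0} \<le> k \<longrightarrow>
     \<delta> * real (a J) \<le> \<bar>\<Sum>i\<in>{1..J}. real_of_int (e i) * real (a i)\<bar>)"

lemma S0: "\<exists>\<delta>>0. \<exists>J0. \<forall>J\<ge>J0. \<forall>e::nat\<Rightarrow>int. (\<Sum>i\<in>{1..J}. \<bar>e i\<bar>) \<le> int m \<longrightarrow> e J \<noteq> 0 \<longrightarrow>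
     (\<forall>i\<in>{1..J}. i < J - L \<longrightarrow> e i = 0) \<longrightarrow>
     \<delta> * real (a J) \<le> \<bar>\<Sum>i\<in>{1..J}. real_of_int (e i) * real (a i)\<bar>"
proof -
  define C where "C = ({..L} \<rightarrow>\<^sub>E {-int m..int m}) \<inter> {c. c 0 \<noteq> 0}"
  define p where "p c = (\<Sum>i\<le>L. of_int (c i) * (1/\<eta>)^i)" for c :: "nat \<Rightarrow> int"
  define \<delta>1 where "\<delta>1 = Min (insert 1 ((\<lambda>c. \<bar>p c\<bar>) ` C))"
  have "finite ({..L} \<rightarrow>\<^sub>E {-int m..int m})" by (intro finite_PiE) auto
  then have finC: "finite C" unfolding C_def by auto
  have pnz: "p c \<noteq> 0" if "c \<in> C" for c
    unfolding p_def using that transc gt1 by (intro transc_p) (auto simp: C_def)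
  have d1pos: "\<delta>1 > 0" unfolding \<delta>1_def using finC pnz by (subst Min_gr_iff) auto
  have d1le: "\<delta>1 \<le> \<bar>p c\<bar>" if "c \<in> C" for c unfolding \<delta>1_def using finC that by (intro Min_le) auto
  define \<epsilon> where "\<epsilon> = \<delta>1 / (2 * (real m + 1))"
  have epos: "\<epsilon> > 0" using d1pos by (simp add: \<epsilon>_def)
  have me: "real m * \<epsilon> \<le> \<delta>1 / 2"
    using d1pos by (simp add: \<epsilon>_def field_simps)
  have ev: "\<forall>i\<in>{..L}. eventually (\<lambda>J. \<bar>real (a (J - i)) / real (a J) - (1/\<eta>)^i\<bar> < \<epsilon>) sequentially"
  proof
    fix i
    have "eventually (\<lambda>M. dist (real (a M) / real (a (M + i))) ((1/\<eta>)^i) < \<epsilon>) sequentially"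
      using tendstoD[OF ratio_lim epos] .
    then obtain M0 where M0: "\<And>M. M \<ge> M0 \<Longrightarrow> \<bar>real (a M) / real (a (M + i)) - (1/\<eta>)^i\<bar> < \<epsilon>"
      by (auto simp: eventually_sequentially dist_real_def)
    show "eventually (\<lambda>J. \<bar>real (a (J - i)) / real (a J) - (1/\<eta>)^i\<bar> < \<epsilon>) sequentially"
      unfolding eventually_sequentially
    proof (intro exI[of _ "M0 + i"] allI impI)
      fix J assume "J \<ge> M0 + i"
      then show "\<bar>real (a (J - i)) / real (a J) - (1/\<eta>)^i\<bar> < \<epsilon>" using M0[of "J - i"] by simp
    qed
  qed
  have "eventually (\<lambda>J. \<forall>i\<in>{..L}. \<bar>real (a (J - i)) / real (a J) - (1/\<eta>)^i\<bar> < \<epsilon>) sequentially"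
    by (rule eventually_ball_finite[OF finite_atMost ev])
  then obtain J0' where J0': "\<And>J i. J \<ge> J0' \<Longrightarrow> i \<le> L \<Longrightarrow> \<bar>real (a (J - i)) / real (a J) - (1/\<eta>)^i\<bar> < \<epsilon>"
    by (auto simp: eventually_sequentially)
  show ?thesis
  proof (intro exI[of _ "\<delta>1/2"] conjI exI[of _ "max J0' (L+1)"] allI impI)
    show "\<delta>1/2 > 0" using d1pos by simp
    fix J e
    assume J: "max J0' (L+1) \<le> J" and es: "(\<Sum>i\<in>{1..J}. \<bar>e i\<bar>) \<le> int m" and eJ: "e J \<noteq> 0"
      and sup: "\<forall>i\<in>{1..J}. i < J - L \<longrightarrow> e i = 0"
    have JL: "L < J" "J \<ge> 1" "J \<ge> J0'" using J by auto
    have sub: "{J-L..J} \<subseteq> {1..J}" using JL by auto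
    have "(\<Sum>i\<in>{1..J}. real_of_int (e i) * real (a i)) = (\<Sum>k\<in>{J-L..J}. real_of_int (e k) * real (a k))"
      using sup sub by (intro sum.mono_neutral_right) auto
    also have "\<dots> = (\<Sum>i\<in>{..L}. real_of_int (e (J - i)) * real (a (J - i)))"
      using JL by (intro reidx) auto
    finally have s1: "(\<Sum>i\<in>{1..J}. real_of_int (e i) * real (a i)) = (\<Sum>i\<in>{..L}. real_of_int (e (J - i)) * real (a (J - i)))" .
    have "(\<Sum>i\<in>{..L}. \<bar>e (J - i)\<bar>) = (\<Sum>k\<in>{J-L..J}. \<bar>e k\<bar>)"
      using JL by (intro reidx[symmetric]) auto
    also have "\<dots> \<le> (\<Sum>i\<in>{1..J}. \<bar>e i\<bar>)" using sub by (intro sum_mono2) auto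
    finally have s2: "(\<Sum>i\<in>{..L}. \<bar>e (J - i)\<bar>) \<le> int m" using es by linarith
    define c where "c = restrict (\<lambda>i. e (J - i)) {..L}"
    have ci: "c i = e (J - i)" if "i \<le> L" for i using that by (simp add: c_def)
    have cb: "\<bar>e (J - i)\<bar> \<le> int m" if "i \<le> L" for i
    proof -
      have "\<bar>e (J - i)\<bar> \<le> (\<Sum>i\<in>{..L}. \<bar>e (J - i)\<bar>)"
        using that by (intro member_le_sum) auto
      then show ?thesis using s2 by linarith
    qed
    have cC: "c \<in> C" unfolding C_def using cb eJ by (auto simp: c_def PiE_iff abs_le_iff) (smt (verit) cb)
    define b where "b i = real (a (J - i)) / real (a J)" for i
    have aJ: "real (a J) > 0" using apos JL by auto
    have "(\<Sum>i\<in>{..L}. real_of_int (e (J - i)) * real (a (J - i))) = real (a J) * (\<Sum>i\<in>{..L}. of_int (c i) * b i)"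
      unfolding sum_distrib_left using aJ by (intro sum.cong) (auto simp: ci b_def)
    then have s3: "(\<Sum>i\<in>{1..J}. real_of_int (e i) * real (a i)) = real (a J) * (\<Sum>i\<in>{..L}. of_int (c i) * b i)"
      using s1 by simp
    have split: "(\<Sum>i\<in>{..L}. of_int (c i) * b i) = p c + (\<Sum>i\<in>{..L}. of_int (c i) * (b i - (1/\<eta>)^i))"
      unfolding p_def sum.distrib[symmetric] by (intro sum.cong) (auto simp: algebra_simps)
    have "\<bar>\<Sum>i\<in>{..L}. of_int (c i) * (b i - (1/\<eta>)^i)\<bar> \<le> (\<Sum>i\<in>{..L}. \<bar>of_int (c i) * (b i - (1/\<eta>)^i)\<bar>)"
      by (rule sum_abs)
    also have "\<dots> \<le> (\<Sum>i\<in>{..L}. \<bar>real_of_int (c i)\<bar> * \<epsilon>)"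
      unfolding abs_mult using J0'[of J] JL by (intro sum_mono mult_left_mono) (auto simp: b_def less_imp_le)
    also have "\<dots> = real_of_int (\<Sum>i\<in>{..L}. \<bar>e (J - i)\<bar>) * \<epsilon>"
      by (simp add: sum_distrib_right ci)
    also have "\<dots> \<le> real m * \<epsilon>"
    proof -
      have s2r: "real_of_int (\<Sum>i\<in>{..L}. \<bar>e (J - i)\<bar>) \<le> real m" using s2 by (metis of_int_le_iff of_int_of_nat_eq)
      show ?thesis by (rule mult_right_mono[OF s2r]) (use epos in simp)
    qed
    finally have err: "\<bar>\<Sum>i\<in>{..L}. of_int (c i) * (b i - (1/\<eta>)^i)\<bar> \<le> \<delta>1/2" using me by linarith
    have "\<delta>1/2 \<le> \<bar>\<Sum>i\<in>{..L}. of_int (c i) * b i\<bar>"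
      using split err d1le[OF cC] by linarith
    then have "\<delta>1/2 * real (a J) \<le> real (a J) * \<bar>\<Sum>i\<in>{..L}. of_int (c i) * b i\<bar>"
      using aJ by (simp add: mult.commute)
    also have "\<dots> = \<bar>\<Sum>i\<in>{1..J}. real_of_int (e i) * real (a i)\<bar>"
      unfolding s3 abs_mult using aJ by simp
    finally show "\<delta>1/2 * real (a J) \<le> \<bar>\<Sum>i\<in>{1..J}. real_of_int (e i) * real (a i)\<bar>" .
  qed
qed

lemma SP0: "SP 0 L"
proof -
  obtain \<delta> J0 where d: "\<delta> > 0" and H: "\<And>J e. J \<ge> J0 \<Longrightarrow> (\<Sum>i\<in>{1..J}. \<bar>e i\<bar>) \<le> int m \<Longrightarrow> e J \<noteq> 0 \<Longrightarrow>
     (\<forall>i\<in>{1..J}. i < J - L \<longrightarrow> e i = 0) \<Longrightarrow>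
     \<delta> * real (a J) \<le> \<bar>\<Sum>i\<in>{1..J}. real_of_int (e i) * real (a i)\<bar>"
    using S0[of L] by blast
  show ?thesis unfolding SP_def
  proof (intro exI[of _ \<delta>] conjI exI[of _ J0] allI impI)
    fix J e assume "J0 \<le> J" "(\<Sum>i\<in>{1..J}. \<bar>e i\<bar>) \<le> int m" "e J \<noteq> 0"
      "card {i\<in>{1..J}. i < J - L \<and> e i \<noteq> 0} \<le> 0"
    then show "\<delta> * real (a J) \<le> \<bar>\<Sum>i\<in>{1..J}. real_of_int (e i) * real (a i)\<bar>"
      by (intro H) auto
  qed (use d in auto)
qed

lemma SP_step: assumes IH: "\<And>L. SP k L" shows "SP (Suc k) L"
proof -
  obtain \<delta>0 J0 where d0: "\<delta>0 > 0" and H0: "\<And>J e. J \<ge> J0 \<Longrightarrow> (\<Sum>i\<in>{1..J}. \<bar>e i\<bar>) \<le> int m \<Longrightarrow> e J \<noteq> 0 \<Longrightarrow>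
     (\<forall>i\<in>{1..J}. i < J - L \<longrightarrow> e i = 0) \<Longrightarrow>
     \<delta>0 * real (a J) \<le> \<bar>\<Sum>i\<in>{1..J}. real_of_int (e i) * real (a i)\<bar>"
    using S0[of L] by blast
  define \<epsilon> where "\<epsilon> = \<delta>0 / (2 * (real m + 1))"
  have epos: "\<epsilon> > 0" using d0 by (simp add: \<epsilon>_def)
  have me: "real m * \<epsilon> \<le> \<delta>0 / 2" using d0 by (simp add: \<epsilon>_def field_simps)
  obtain G J1 where G: "\<And>J. J \<ge> J1 \<Longrightarrow> real (a (J - G)) \<le> \<epsilon> * real (a J)"
    using gap[OF epos] by blast
  obtain \<delta>1 J2 where d1: "\<delta>1 > 0" and H1: "\<And>J e. J \<ge> J2 \<Longrightarrow> (\<Sum>i\<in>{1..J}. \<bar>e i\<bar>) \<le> int m \<Longrightarrow> e J \<noteq> 0 \<Longrightarrow>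
     card {i\<in>{1..J}. i < J - (L + G) \<and> e i \<noteq> 0} \<le> k \<Longrightarrow>
     \<delta>1 * real (a J) \<le> \<bar>\<Sum>i\<in>{1..J}. real_of_int (e i) * real (a i)\<bar>"
    using IH[of "L + G"] unfolding SP_def by blast
  show ?thesis unfolding SP_def
  proof (intro exI[of _ "min (\<delta>0/2) \<delta>1"] conjI exI[of _ "max (max J0 J1) (max J2 (L + G + 1))"] allI impI)
    show "min (\<delta>0/2) \<delta>1 > 0" using d0 d1 by simp
    fix J e
    assume J: "max (max J0 J1) (max J2 (L + G + 1)) \<le> J" and es: "(\<Sum>i\<in>{1..J}. \<bar>e i\<bar>) \<le> int m"
      and eJ: "e J \<noteq> 0" and cd: "card {i\<in>{1..J}. i < J - L \<and> e i \<noteq> 0} \<le> Suc k"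
    define X where "X = {i\<in>{1..J}. i < J - L \<and> e i \<noteq> 0}"
    have aJ: "real (a J) > 0" using apos J by auto
    show "min (\<delta>0/2) \<delta>1 * real (a J) \<le> \<bar>\<Sum>i\<in>{1..J}. real_of_int (e i) * real (a i)\<bar>"
    proof (cases "\<exists>i0\<in>X. \<not> i0 < J - (L + G)")
      case True
      then obtain i0 where i0: "i0 \<in> X" "\<not> i0 < J - (L + G)" by blast
      have "{i\<in>{1..J}. i < J - (L + G) \<and> e i \<noteq> 0} \<subseteq> X - {i0}" using i0 by (auto simp: X_def)
      then have "card {i\<in>{1..J}. i < J - (L + G) \<and> e i \<noteq> 0} \<le> card (X - {i0})"
        by (intro card_mono) (auto simp: X_def)
      also have "\<dots> = card X - 1" using i0 by (simp add: X_def)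
      also have "\<dots> \<le> k" using cd by (simp add: X_def)
      finally have "\<delta>1 * real (a J) \<le> \<bar>\<Sum>i\<in>{1..J}. real_of_int (e i) * real (a i)\<bar>"
        using J es eJ by (intro H1) auto
      moreover have "min (\<delta>0/2) \<delta>1 * real (a J) \<le> \<delta>1 * real (a J)"
        using aJ by (intro mult_right_mono) auto
      ultimately show ?thesis by linarith
    next
      case False
      then have tailI: "i < J - (L + G)" if "i \<in> {1..J}" "i < J - L" "e i \<noteq> 0" for i
        using that by (auto simp: X_def)
      define e1 where "e1 i = (if i < J - L then 0 else e i)" for i
      define e2 where "e2 i = (if i < J - L then e i else 0)" for i
      have split: "(\<Sum>i\<in>{1..J}. real_of_int (e i) * real (a i)) =
        (\<Sum>i\<in>{1..J}. real_of_int (e1 i) * real (a i)) + (\<Sum>i\<in>{1..J}. real_of_int (e2 i) * real (a i))"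
        unfolding sum.distrib[symmetric] by (intro sum.cong) (auto simp: e1_def e2_def)
      have es1: "(\<Sum>i\<in>{1..J}. \<bar>e1 i\<bar>) \<le> int m"
        using es by (smt (verit) e1_def sum_mono abs_ge_zero)
      have es2: "(\<Sum>i\<in>{1..J}. \<bar>e2 i\<bar>) \<le> int m"
        using es by (smt (verit) e2_def sum_mono abs_ge_zero)
      have head: "\<delta>0 * real (a J) \<le> \<bar>\<Sum>i\<in>{1..J}. real_of_int (e1 i) * real (a i)\<bar>"
        using J es1 eJ by (intro H0) (auto simp: e1_def)
      have "\<bar>\<Sum>i\<in>{1..J}. real_of_int (e2 i) * real (a i)\<bar> \<le> (\<Sum>i\<in>{1..J}. \<bar>real_of_int (e2 i) * real (a i)\<bar>)"
        by (rule sum_abs)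
      also have "\<dots> \<le> (\<Sum>i\<in>{1..J}. \<bar>real_of_int (e2 i)\<bar> * real (a (J - G)))"
      proof (intro sum_mono)
        fix i assume i: "i \<in> {1..J}"
        show "\<bar>real_of_int (e2 i) * real (a i)\<bar> \<le> \<bar>real_of_int (e2 i)\<bar> * real (a (J - G))"
        proof (cases "e2 i = 0")
          case False
          then have "i < J - L" "e i \<noteq> 0" by (auto simp: e2_def split: if_splits)
          then have "i < J - (L + G)" using tailI i by blast
          then have "a i \<le> a (J - G)" using i by (intro mono_a) auto
          then show ?thesis unfolding abs_mult by (intro mult_left_mono) auto
        qed simp
      qed
      also have "\<dots> = real_of_int (\<Sum>i\<in>{1..J}. \<bar>e2 i\<bar>) * real (a (J - G))"
        by (simp add: sum_distrib_right)
      also have "\<dots> \<le> real m * real (a (J - G))"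
      proof -
        have s2r: "real_of_int (\<Sum>i\<in>{1..J}. \<bar>e2 i\<bar>) \<le> real m" using es2 by (metis of_int_le_iff of_int_of_nat_eq)
        show ?thesis by (rule mult_right_mono[OF s2r]) simp
      qed
      also have "\<dots> \<le> real m * (\<epsilon> * real (a J))" using G[of J] J by (intro mult_left_mono) auto
      also have "\<dots> \<le> \<delta>0 / 2 * real (a J)" using me aJ by (simp add: mult.assoc[symmetric] mult_right_mono)
      finally have tail: "\<bar>\<Sum>i\<in>{1..J}. real_of_int (e2 i) * real (a i)\<bar> \<le> \<delta>0 / 2 * real (a J)" .
      have "min (\<delta>0/2) \<delta>1 * real (a J) \<le> \<delta>0/2 * real (a J)"
        using aJ by (intro mult_right_mono) auto
      then show ?thesis unfolding split using head tail by linarith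
    qed
  qed
qed

lemma SP_all: "SP k L"
proof (induction k arbitrary: L)
  case 0 then show ?case by (rule SP0)
next
  case (Suc k) then show ?case by (intro SP_step) auto
qed

lemma mainL: "\<exists>l\<ge>1. \<forall>n e. (\<forall>k. e k \<noteq> 0 \<longrightarrow> k \<in> {1..n}) \<longrightarrow> (\<Sum>k\<in>{1..n}. \<bar>e k\<bar>) \<le> int m \<longrightarrow>
    (\<Sum>k\<in>{1..n}. e k * int (a k)) = 0 \<longrightarrow> (\<forall>k>l. e k = 0)"
proof -
  obtain \<delta> J0 where d: "\<delta> > 0" and H: "\<And>J e. J \<ge> J0 \<Longrightarrow> (\<Sum>i\<in>{1..J}. \<bar>e i\<bar>) \<le> int m \<Longrightarrow> e J \<noteq> 0 \<Longrightarrow>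
     card {i\<in>{1..J}. i < J - 0 \<and> e i \<noteq> 0} \<le> m \<Longrightarrow>
     \<delta> * real (a J) \<le> \<bar>\<Sum>i\<in>{1..J}. real_of_int (e i) * real (a i)\<bar>"
    using SP_all[of m 0] unfolding SP_def by blast
  show ?thesis
  proof (intro exI[of _ "max 1 J0"] conjI allI impI)
    fix n e k
    assume sup: "\<forall>k. e k \<noteq> 0 \<longrightarrow> k \<in> {1..n}" and es: "(\<Sum>k\<in>{1..n}. \<bar>e k\<bar>) \<le> int m"
      and z: "(\<Sum>k\<in>{1..n}. e k * int (a k)) = 0" and k: "max 1 J0 < k"
    show "e k = 0"
    proof (rule ccontr)
      assume ek: "e k \<noteq> 0"
      define S where "S = {k. e k \<noteq> 0}"
      have finS: "finite S" using sup by (intro finite_subset[of S "{1..n}"]) (auto simp: S_def)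
      define J where "J = Max S"
      have kS: "k \<in> S" using ek by (simp add: S_def)
      have kJ: "k \<le> J" unfolding J_def using finS kS by (rule Max_ge)
      have JS: "J \<in> S" unfolding J_def using finS kS by (intro Max_in) auto
      have eJ: "e J \<noteq> 0" using JS by (simp add: S_def)
      have Jn: "J \<in> {1..n}" using sup eJ by auto
      have above: "e i = 0" if "i > J" for i
        using Max_ge[OF finS, of i] that by (auto simp: S_def J_def)
      have sub: "{1..J} \<subseteq> {1..n}" using Jn by auto
      have esJ: "(\<Sum>i\<in>{1..J}. \<bar>e i\<bar>) \<le> int m"
        using es sub by (smt (verit) sum_mono2 finite_atLeastAtMost abs_ge_zero)
      have "(\<Sum>k\<in>{1..n}. e k * int (a k)) = (\<Sum>k\<in>{1..J}. e k * int (a k))"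
        using sub above by (intro sum.mono_neutral_right) auto
      then have "(\<Sum>k\<in>{1..J}. e k * int (a k)) = 0" using z by simp
      then have "real_of_int (\<Sum>k\<in>{1..J}. e k * int (a k)) = 0" by simp
      then have zJ: "(\<Sum>i\<in>{1..J}. real_of_int (e i) * real (a i)) = 0"
        by (simp add: of_int_sum)
      have "int (card {i\<in>{1..J}. i < J - 0 \<and> e i \<noteq> 0}) = (\<Sum>i\<in>{i\<in>{1..J}. i < J - 0 \<and> e i \<noteq> 0}. 1)"
        by simp
      also have "\<dots> \<le> (\<Sum>i\<in>{i\<in>{1..J}. i < J - 0 \<and> e i \<noteq> 0}. \<bar>e i\<bar>)"
        by (intro sum_mono) auto
      also have "\<dots> \<le> (\<Sum>i\<in>{1..J}. \<bar>e i\<bar>)" by (intro sum_mono2) auto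
      finally have "card {i\<in>{1..J}. i < J - 0 \<and> e i \<noteq> 0} \<le> m" using esJ by linarith
      then have "\<delta> * real (a J) \<le> 0" using H[of J e] kJ k esJ eJ zJ by auto
      moreover have "real (a J) > 0" using apos Jn by auto
      ultimately show False using d by (simp add: mult_le_0_iff)
    qed
  qed simp
qed

end

lemma Pw_repr: "finite I \<Longrightarrow> N \<in> Pw {int (a k) |k. k \<in> I} u \<Longrightarrow>
  \<exists>e. (\<forall>k. e k \<noteq> 0 \<longrightarrow> k \<in> I) \<and> (\<Sum>k\<in>I. \<bar>e k\<bar>) \<le> int u \<and> N = (\<Sum>k\<in>I. e k * int (a k))"
proof (induction u arbitrary: N)
  case 0 then show ?case by (intro exI[of _ "\<lambda>_. 0"]) auto
next
  case (Suc u)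
  from Suc.prems(2) obtain x y k0 where y: "y \<in> Pw {int (a k) |k. k \<in> I} u" and k0: "k0 \<in> I" and x: "x = int (a k0)"
    and N: "N = x + y \<or> N = x - y"
    by (auto simp: pm_def)
  obtain e where e1: "\<forall>k. e k \<noteq> 0 \<longrightarrow> k \<in> I" and e2: "(\<Sum>k\<in>I. \<bar>e k\<bar>) \<le> int u"
    and e3: "y = (\<Sum>k\<in>I. e k * int (a k))" using Suc.IH[OF Suc.prems(1) y] by blast
  have d1: "(\<Sum>k\<in>I. (if k = k0 then 1 else 0) * int (a k)) = int (a k0)"
  proof -
    have "(\<Sum>k\<in>I. (if k = k0 then 1 else 0) * int (a k)) = (\<Sum>k\<in>I. if k = k0 then int (a k) else 0)"
      by (intro sum.cong) auto
    also have "\<dots> = int (a k0)" using k0 Suc.prems(1) by simp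
    finally show ?thesis .
  qed
  have d2: "(\<Sum>k\<in>I. \<bar>(if k = k0 then 1 else 0)::int\<bar>) = 1"
    using k0 Suc.prems(1) by (simp add: if_distrib cong: if_cong)
  from N show ?case
  proof
    assume N: "N = x + y"
    define e' where "e' k = e k + (if k = k0 then 1 else 0)" for k
    have "(\<Sum>k\<in>I. \<bar>e' k\<bar>) \<le> (\<Sum>k\<in>I. \<bar>e k\<bar> + \<bar>(if k = k0 then 1 else 0)::int\<bar>)"
      unfolding e'_def by (intro sum_mono abs_triangle_ineq)
    also have "\<dots> \<le> int (Suc u)" using e2 d2 by (simp add: sum.distrib)
    finally have A: "(\<Sum>k\<in>I. \<bar>e' k\<bar>) \<le> int (Suc u)" .
    have B: "N = (\<Sum>k\<in>I. e' k * int (a k))"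
      unfolding e'_def N x e3 distrib_right sum.distrib d1 by simp
    show ?thesis using A B e1 k0 by (intro exI[of _ e']) (auto simp: e'_def split: if_splits)
  next
    assume N: "N = x - y"
    define e' where "e' k = (if k = k0 then 1 else 0) - e k" for k
    have "(\<Sum>k\<in>I. \<bar>e' k\<bar>) \<le> (\<Sum>k\<in>I. \<bar>(if k = k0 then 1 else 0)::int\<bar> + \<bar>e k\<bar>)"
      unfolding e'_def by (intro sum_mono abs_triangle_ineq4)
    also have "\<dots> \<le> int (Suc u)" using e2 d2 by (simp add: sum.distrib)
    finally have A: "(\<Sum>k\<in>I. \<bar>e' k\<bar>) \<le> int (Suc u)" .
    have B: "N = (\<Sum>k\<in>I. e' k * int (a k))"
      unfolding e'_def N x e3 left_diff_distrib sum_subtractf d1 by simp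
    show ?thesis using A B e1 k0 by (intro exI[of _ e']) (auto simp: e'_def split: if_splits)
  qed
qed

theorem lemma2p2:
  fixes a :: "nat \<Rightarrow> nat" and \<eta> :: real and m :: nat
  assumes pos: "\<And>k. k \<ge> 1 \<Longrightarrow> a k > 0"
    and incr: "\<And>k. k \<ge> 1 \<Longrightarrow> a k < a (Suc k)"
    and lim: "(\<lambda>k. real (a (Suc k)) / real (a k)) \<longlonglongrightarrow> \<eta>"
    and gt1: "\<eta> > 1"
    and transc: "\<not> algebraic \<eta>"
  shows "\<exists>l::nat. l \<ge> 1 \<and>
    (\<forall>u v n :: nat. u + v \<le> m \<longrightarrow>
      E01 (\<lambda>\<omega>. cos_sum a 1 l \<omega> ^ u * cos_sum a (l + 1) n \<omega> ^ v)
      = E01 (\<lambda>\<omega>. cos_sum a 1 l \<omega> ^ u) * E01 (\<lambda>\<omega>. cos_sum a (l + 1) n \<omega> ^ v))"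
proof -
  obtain l where l1: "l \<ge> 1" and Hl: "\<And>n e. (\<forall>k. e k \<noteq> 0 \<longrightarrow> k \<in> {1..n}) \<Longrightarrow> (\<Sum>k\<in>{1..n}. \<bar>e k\<bar>) \<le> int m \<Longrightarrow>
    (\<Sum>k\<in>{1..n}. e k * int (a k)) = 0 \<Longrightarrow> (\<forall>k>l. e k = 0)"
    using mainL[of a \<eta> m, OF pos incr lim gt1 transc] by blast
  show ?thesis
  proof (intro exI[of _ l] conjI l1 allI impI)
    fix u v n :: nat assume uv: "u + v \<le> m"
    define A1 where "A1 = {int (a k) |k. k \<in> {1..l}}"
    define A2 where "A2 = {int (a k) |k. k \<in> {l+1..n}}"
    have f: "tp (Pw A1 u) (\<lambda>\<omega>. cos_sum a 1 l \<omega> ^ u)" unfolding A1_def by (intro tp_pow tp_cos_sum)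
    have g: "tp (Pw A2 v) (\<lambda>\<omega>. cos_sum a (l + 1) n \<omega> ^ v)" unfolding A2_def by (intro tp_pow tp_cos_sum)
    show "E01 (\<lambda>\<omega>. cos_sum a 1 l \<omega> ^ u * cos_sum a (l + 1) n \<omega> ^ v)
      = E01 (\<lambda>\<omega>. cos_sum a 1 l \<omega> ^ u) * E01 (\<lambda>\<omega>. cos_sum a (l + 1) n \<omega> ^ v)"
    proof (rule key[OF f g])
      fix N M assume N: "N \<in> Pw A1 u" and M: "M \<in> Pw A2 v" and NM: "N = M \<or> N = - M"
      obtain e1 where e11: "\<forall>k. e1 k \<noteq> 0 \<longrightarrow> k \<in> {1..l}" and e12: "(\<Sum>k\<in>{1..l}. \<bar>e1 k\<bar>) \<le> int u"
        and e13: "N = (\<Sum>k\<in>{1..l}. e1 k * int (a k))" using Pw_repr[of "{1..l}" N a u] N A1_def by auto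
      obtain e2 where e21: "\<forall>k. e2 k \<noteq> 0 \<longrightarrow> k \<in> {l+1..n}" and e22: "(\<Sum>k\<in>{l+1..n}. \<bar>e2 k\<bar>) \<le> int v"
        and e23: "M = (\<Sum>k\<in>{l+1..n}. e2 k * int (a k))" using Pw_repr[of "{l+1..n}" M a v] M A2_def by auto
      obtain s :: int where s: "s = 1 \<or> s = -1" and sNM: "N = s * M" using NM by (metis mult_1 mult_minus1)
      define n' where "n' = max l n"
      define e where "e k = e1 k - s * e2 k" for k
      have sub1: "{1..l} \<subseteq> {1..n'}" and sub2: "{l+1..n} \<subseteq> {1..n'}" by (auto simp: n'_def)
      have x1: "(\<Sum>k\<in>{1..n'}. h k) = (\<Sum>k\<in>{1..l}. h k)" if "\<And>k. e1 k = 0 \<Longrightarrow> h k = 0" for h :: "nat \<Rightarrow> int"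
      proof (rule sum.mono_neutral_right)
        show "\<forall>i\<in>{1..n'} - {1..l}. h i = 0"
        proof
          fix i assume "i \<in> {1..n'} - {1..l}"
          then have "e1 i = 0" using e11 by auto
          then show "h i = 0" by (rule that)
        qed
      qed (use sub1 in auto)
      have x2: "(\<Sum>k\<in>{1..n'}. h k) = (\<Sum>k\<in>{l+1..n}. h k)" if "\<And>k. e2 k = 0 \<Longrightarrow> h k = 0" for h :: "nat \<Rightarrow> int"
      proof (rule sum.mono_neutral_right)
        show "\<forall>i\<in>{1..n'} - {l+1..n}. h i = 0"
        proof
          fix i assume "i \<in> {1..n'} - {l+1..n}"
          then have "e2 i = 0" using e21 by auto
          then show "h i = 0" by (rule that)
        qed
      qed (use sub2 in auto)
      have supp: "\<forall>k. e k \<noteq> 0 \<longrightarrow> k \<in> {1..n'}"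
      proof (intro allI impI)
        fix k assume "e k \<noteq> 0"
        then have "e1 k \<noteq> 0 \<or> e2 k \<noteq> 0" by (auto simp: e_def)
        then show "k \<in> {1..n'}" using e11 e21 sub1 sub2 by blast
      qed
      have sabs: "\<bar>s\<bar> = 1" using s by auto
      have "(\<Sum>k\<in>{1..n'}. \<bar>e k\<bar>) \<le> (\<Sum>k\<in>{1..n'}. \<bar>e1 k\<bar> + \<bar>e2 k\<bar>)"
      proof (rule sum_mono)
        fix k
        have "\<bar>e1 k - s * e2 k\<bar> \<le> \<bar>e1 k\<bar> + \<bar>s * e2 k\<bar>" by (rule abs_triangle_ineq4)
        then show "\<bar>e k\<bar> \<le> \<bar>e1 k\<bar> + \<bar>e2 k\<bar>" unfolding e_def abs_mult sabs by simp
      qed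
      also have "\<dots> = (\<Sum>k\<in>{1..n'}. \<bar>e1 k\<bar>) + (\<Sum>k\<in>{1..n'}. \<bar>e2 k\<bar>)" by (rule sum.distrib)
      also have "(\<Sum>k\<in>{1..n'}. \<bar>e1 k\<bar>) = (\<Sum>k\<in>{1..l}. \<bar>e1 k\<bar>)" by (rule x1) simp
      also have "(\<Sum>k\<in>{1..n'}. \<bar>e2 k\<bar>) = (\<Sum>k\<in>{l+1..n}. \<bar>e2 k\<bar>)" by (rule x2) simp
      also have "(\<Sum>k\<in>{1..l}. \<bar>e1 k\<bar>) + (\<Sum>k\<in>{l+1..n}. \<bar>e2 k\<bar>) \<le> int m" using e12 e22 uv by linarith
      finally have es: "(\<Sum>k\<in>{1..n'}. \<bar>e k\<bar>) \<le> int m" .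
      have "(\<Sum>k\<in>{1..n'}. e k * int (a k)) = (\<Sum>k\<in>{1..n'}. e1 k * int (a k)) - s * (\<Sum>k\<in>{1..n'}. e2 k * int (a k))"
        unfolding e_def by (simp add: left_diff_distrib sum_subtractf sum_distrib_left mult.assoc)
      also have "(\<Sum>k\<in>{1..n'}. e1 k * int (a k)) = N" unfolding e13 by (rule x1) simp
      also have "(\<Sum>k\<in>{1..n'}. e2 k * int (a k)) = M" unfolding e23 by (rule x2) simp
      also have "N - s * M = 0" using sNM by simp
      finally have ez: "(\<Sum>k\<in>{1..n'}. e k * int (a k)) = 0" .
      have big: "\<forall>k>l. e k = 0" by (rule Hl[OF supp es ez])
      have "e2 k = 0" if "k \<in> {l+1..n}" for k
      proof -
        have "e1 k = 0" using e11 that by auto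
        moreover have "e k = 0" using big that by auto
        ultimately show ?thesis using s by (auto simp: e_def)
      qed
      then have M0: "M = 0" unfolding e23 by simp
      then show "N = 0 \<and> M = 0" using sNM by simp
    qed
  qed
qed

end
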